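(* Let $\mathbb{F}_q$ have characteristic $p$, let $n,v\ge1$, $\mathcal{R}=\mathbb{F}_q[x_1,\dots,x_v]/\langle x_1^{i_1}\cdots x_v^{i_v}\mid i_1+\dots+i_v=n\rangle$, and let $l\in\{1,\dots,v\}$. Then \[ \mathbb{E}_{\chi\in\widehat{\mathcal{R}_\times}}\left[\left|\sum_{a\in\mathbb{F}_q^*}\chi(x_l-a)\right|\right]\le\frac{q-1}{\sqrt{p-1}}, \] where the expectation is over $\chi$ chosen uniformly from all characters of the unit group $\mathcal{R}_\times$.
   Context: For $a\in\mathbb{F}_q^*$, $x_l-a$ is a unit of $\mathcal{R}$. $\widehat{\mathcal{R}_\times}$ denotes the group of homomorphisms from $\mathcal{R}_\times$ to the complex unit circle. *)

theory Defs
  imports Complex_Main "HOL-Algebra.Ring" "HOL-Library.Cardinality"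
begin

text \<open>Exponent vectors (x_1..x_v indexed by 0..v-1) of monomials that survive in
  F_q[x_1..x_v] / < all monomials of total degree n >, i.e. total degree < n.\<close>
definition trunc_monos :: "nat \<Rightarrow> nat \<Rightarrow> (nat \<Rightarrow> nat) set" where
  "trunc_monos v n = {e. (\<forall>i\<ge>v. e i = 0) \<and> (\<Sum>i<v. e i) < n}"

text \<open>The truncated polynomial ring R: elements are coefficient functions supported
  on the surviving monomials; multiplication is convolution followed by truncation.\<close>
definition trunc_ring :: "nat \<Rightarrow> nat \<Rightarrow> ((nat \<Rightarrow> nat) \<Rightarrow> 'a::field) ring" where
  "trunc_ring v n = \<lparr>
     carrier = {f. \<forall>e. e \<notin> trunc_monos v n \<longrightarrow> f e = 0},
     mult = (\<lambda>f g e. if e \<in> trunc_monos v n then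
                (\<Sum>(e1, e2) \<in> {(e1, e2). e1 \<in> trunc_monos v n \<and> e2 \<in> trunc_monos v n \<and> (\<lambda>i. e1 i + e2 i) = e}.
                    f e1 * g e2)
              else 0),
     one = (\<lambda>e. if e = (\<lambda>_. 0) then 1 else 0),
     zero = (\<lambda>_. 0),
     add = (\<lambda>f g e. f e + g e)\<rparr>"

text \<open>The element x_l - a of R (variable index l, 0-based), i.e. the image of the
  polynomial x_l - a under the quotient map.\<close>
definition var_minus_const :: "nat \<Rightarrow> nat \<Rightarrow> nat \<Rightarrow> 'a::field \<Rightarrow> (nat \<Rightarrow> nat) \<Rightarrow> 'a" where
  "var_minus_const v n l a = (\<lambda>e. if e \<in> trunc_monos v n then
       (if e = (\<lambda>i. if i = l then 1 else 0) then 1 else 0) - (if e = (\<lambda>_. 0) then a else 0)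
     else 0)"

definition circle_group :: "complex monoid" where
  "circle_group = \<lparr>carrier = {z. cmod z = 1}, mult = (*), one = 1\<rparr>"

text \<open>Characters of the unit group R_x: homomorphisms from R_x to the unit circle
  (taken extensional, i.e. undefined outside R_x, so the set is the dual group).\<close>
definition unit_characters :: "nat \<Rightarrow> nat \<Rightarrow> (((nat \<Rightarrow> nat) \<Rightarrow> 'a::field) \<Rightarrow> complex) set" where
  "unit_characters v n =
     {\<chi>. \<chi> \<in> hom (units_of (trunc_ring v n)) circle_group \<and>
         \<chi> \<in> extensional (Units (trunc_ring v n))}"

end

theory Submission
  imports Defs "HOL-Algebra.Multiplicative_Group" "HOL-Analysis.Convex"
begin


definition R0 :: "'a::field ring" where
  "R0 = \<lparr>carrier = UNIV, mult = (*), one = 1, zero = 0, add = (+)\<rparr>"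

lemma field_R0: "field (R0 :: 'a::field ring)"
proof -
  have "\<exists>y. x + y = 0" for x :: 'a
    using add.right_inverse by blast
  moreover have "x \<noteq> 0 \<Longrightarrow> \<exists>y. x * y = 1" for x :: 'a
    by (rule exI[of _ "inverse x"]) auto
  ultimately show ?thesis
    unfolding R0_def using add.right_inverse
    apply unfold_locales
    apply (auto simp: algebra_simps Units_def)
    done
qed

lemma R0_pow: "x [^]\<^bsub>(R0::'a::field ring)\<^esub> (k::nat) = x ^ k"
  by (induction k) (simp_all add: R0_def mult.commute)

lemma cyclic_gen:
  obtains g :: "'a::{finite,field}" where "g \<noteq> 0" "g ^ (CARD('a) - 1) = 1"
    "\<And>x. x \<noteq> 0 \<Longrightarrow> \<exists>i. x = g ^ i"
proof -
  interpret F: field "R0::'a ring" by (rule field_R0)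
  have fin: "finite (carrier (R0::'a ring))" by simp
  obtain g where g: "g \<in> carrier (mult_of (R0::'a ring))"
    "carrier (mult_of (R0::'a ring)) = {g[^]\<^bsub>R0::'a ring\<^esub>i | i::nat . i \<in> UNIV}"
    using F.finite_field_mult_group_has_gen[OF fin] by (auto simp: nat_pow_mult_of)
  interpret G: group "mult_of (R0::'a ring)" by (rule F.field_mult_group)
  have cm: "carrier (mult_of (R0::'a ring)) = UNIV - {0}" by (simp add: R0_def)
  have "g [^]\<^bsub>mult_of (R0::'a ring)\<^esub> order (mult_of (R0::'a ring)) = \<one>\<^bsub>mult_of (R0::'a ring)\<^esub>"
    using G.pow_order_eq_1[OF g(1)] .
  moreover have "order (mult_of (R0::'a ring)) = CARD('a) - 1"
    unfolding order_def cm by (simp add: card_Diff_singleton)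
  ultimately have "g ^ (CARD('a) - 1) = 1"
    by (simp add: nat_pow_mult_of R0_pow) (simp add: R0_def)
  moreover have "g \<noteq> 0" using g(1) cm by auto
  moreover have "\<exists>i. x = g ^ i" if "x \<noteq> 0" for x
  proof -
    have "x \<in> carrier (mult_of (R0::'a ring))" using that cm by auto
    then show ?thesis using g(2) by (auto simp: R0_pow)
  qed
  ultimately show ?thesis using that by blast
qed

lemma cyclic_char:
  obtains \<phi> :: "'a::{finite,field} \<Rightarrow> complex" where
    "\<And>x. x \<noteq> 0 \<Longrightarrow> cmod (\<phi> x) = 1"
    "\<And>x y. x \<noteq> 0 \<Longrightarrow> y \<noteq> 0 \<Longrightarrow> \<phi> (x * y) = \<phi> x * \<phi> y"
    "\<And>x y. x \<noteq> 0 \<Longrightarrow> y \<noteq> 0 \<Longrightarrow> \<phi> x = \<phi> y \<Longrightarrow> x = y"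
proof -
  obtain g :: 'a where g: "g \<noteq> 0" "g ^ (CARD('a) - 1) = 1" "\<And>x. x \<noteq> 0 \<Longrightarrow> \<exists>i. x = g ^ i"
    using cyclic_gen[where 'a='a] by blast
  define m where "m = CARD('a) - 1"
  have "CARD('a) \<ge> 2"
  proof -
    have "{0::'a, 1} \<subseteq> UNIV" by simp
    then have "card {0::'a,1} \<le> CARD('a)" by (intro card_mono) auto
    then show ?thesis by simp
  qed
  then have m0: "m > 0" by (simp add: m_def)
  have gm: "g ^ m = 1" using g(2) by (simp add: m_def)
  have gmod: "g ^ i = g ^ (i mod m)" for i
  proof -
    have "g ^ i = g ^ (m * (i div m) + i mod m)" by (simp only: mult_div_mod_eq)
    also have "\<dots> = g ^ (i mod m)" by (simp only: power_add power_mult gm power_one mult_1)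
    finally show ?thesis .
  qed
  have img: "(\<lambda>k. g ^ k) ` {..<m} = UNIV - {0}"
  proof
    show "(\<lambda>k. g ^ k) ` {..<m} \<subseteq> UNIV - {0}" using g(1) by auto
    show "UNIV - {0} \<subseteq> (\<lambda>k. g ^ k) ` {..<m}"
    proof
      fix x assume "x \<in> UNIV - {0::'a}"
      then obtain i where "x = g ^ i" using g(3) by auto
      then have "x = g ^ (i mod m)" using gmod by simp
      then show "x \<in> (\<lambda>k. g ^ k) ` {..<m}" using m0 by auto
    qed
  qed
  have inj: "inj_on (\<lambda>k. g ^ k) {..<m}"
  proof (rule eq_card_imp_inj_on)
    show "finite {..<m}" by simp
    show "card ((\<lambda>k. g ^ k) ` {..<m}) = card {..<m}"
      unfolding img by (simp add: card_Diff_singleton m_def)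
  qed
  define dl where "dl x = (SOME k. k < m \<and> g ^ k = x)" for x
  have dl: "dl x < m \<and> g ^ dl x = x" if "x \<noteq> 0" for x
  proof -
    have "x \<in> (\<lambda>k. g ^ k) ` {..<m}" using img that by simp
    then have "\<exists>k. k < m \<and> g ^ k = x" by auto
    then show ?thesis unfolding dl_def by (rule someI_ex)
  qed
  define w where "w = cis (2 * pi / real m)"
  have wk: "w ^ k = cis (2 * pi * real k / real m)" for k
    by (simp add: w_def DeMoivre mult_ac)
  have wm: "w ^ m = 1" using m0 by (simp add: wk)
  have wmod: "w ^ i = w ^ (i mod m)" for i
  proof -
    have "w ^ i = w ^ (m * (i div m) + i mod m)" by (simp only: mult_div_mod_eq)
    also have "\<dots> = w ^ (i mod m)" by (simp only: power_add power_mult wm power_one mult_1)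
    finally show ?thesis .
  qed
  have wfun: "(\<lambda>k. w ^ k) = (\<lambda>k. cis (2 * pi * real k / real m))" using wk by (rule ext)
  have winj: "inj_on (\<lambda>k. w ^ k) {..<m}"
    using bij_betw_roots_unity[OF m0] unfolding bij_betw_def wfun by (rule conjunct1)
  define \<phi> where "\<phi> x = w ^ dl x" for x
  show ?thesis
  proof (rule that)
    show "cmod (\<phi> x) = 1" for x by (simp add: \<phi>_def w_def norm_power)
    show "\<phi> (x * y) = \<phi> x * \<phi> y" if "x \<noteq> 0" "y \<noteq> 0" for x y
    proof -
      have xy: "x * y \<noteq> 0" using that by simp
      have e1: "g ^ ((dl x + dl y) mod m) = x * y"
        using dl[OF that(1)] dl[OF that(2)] gmod[of "dl x + dl y"] by (simp add: power_add)
      have e2: "g ^ ((dl x + dl y) mod m) = g ^ dl (x * y)" using e1 dl[OF xy] by simp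
      have "(dl x + dl y) mod m \<in> {..<m}" using m0 by simp
      moreover have "dl (x * y) \<in> {..<m}" using dl[OF xy] by simp
      ultimately have "(dl x + dl y) mod m = dl (x * y)"
        using inj_onD[OF inj e2] by blast
      then have "\<phi> (x * y) = w ^ ((dl x + dl y) mod m)" by (simp add: \<phi>_def)
      also have "\<dots> = w ^ (dl x + dl y)" using wmod by simp
      finally show ?thesis by (simp add: \<phi>_def power_add)
    qed
    show "x = y" if "x \<noteq> 0" "y \<noteq> 0" "\<phi> x = \<phi> y" for x y
    proof -
      have "w ^ dl x = w ^ dl y" using that(3) by (simp add: \<phi>_def)
      then have "dl x = dl y" using inj_onD[OF winj] dl[OF that(1)] dl[OF that(2)] by blast
      then show ?thesis using dl[OF that(1)] dl[OF that(2)] by metis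
    qed
  qed
qed



definition Pset :: "nat \<Rightarrow> nat \<Rightarrow> (nat \<Rightarrow> nat) \<Rightarrow> ((nat \<Rightarrow> nat) \<times> (nat \<Rightarrow> nat)) set" where
  "Pset v n e = {(e1, e2). e1 \<in> trunc_monos v n \<and> e2 \<in> trunc_monos v n \<and> (\<lambda>i. e1 i + e2 i) = e}"

definition Qset :: "nat \<Rightarrow> nat \<Rightarrow> (nat \<Rightarrow> nat) \<Rightarrow> ((nat \<Rightarrow> nat) \<times> (nat \<Rightarrow> nat) \<times> (nat \<Rightarrow> nat)) set" where
  "Qset v n e = {(a, b, c). a \<in> trunc_monos v n \<and> b \<in> trunc_monos v n \<and> c \<in> trunc_monos v n
      \<and> (\<lambda>i. a i + b i + c i) = e}"

definition dlt :: "nat \<Rightarrow> nat \<Rightarrow> nat" where "dlt l = (\<lambda>i. if i = l then 1 else 0)"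

lemma mult_tr: "mult (trunc_ring v n) f g e = (if e \<in> trunc_monos v n then
    (\<Sum>p\<in>Pset v n e. f (fst p) * (g (snd p) :: 'a::field)) else 0)"
  by (simp add: trunc_ring_def Pset_def split_def)

lemma one_tr: "one (trunc_ring v n) = (\<lambda>e. if e = (\<lambda>_. 0) then (1::'a::field) else 0)"
  by (simp add: trunc_ring_def)

lemma carrier_tr: "f \<in> carrier (trunc_ring v n) \<longleftrightarrow> (\<forall>e. e \<notin> trunc_monos v n \<longrightarrow> (f e :: 'a::field) = 0)"
  by (simp add: trunc_ring_def)

lemma finite_T: "finite (trunc_monos v n)"
proof -
  have "trunc_monos v n \<subseteq> (\<lambda>f i. if i < v then f i else 0) ` ({..<v} \<rightarrow>\<^sub>E {..<n})"
  proof
    fix e assume e: "e \<in> trunc_monos v n"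
    have lt: "e i < n" if "i < v" for i
    proof -
      have "e i \<le> (\<Sum>i<v. e i)" using that by (intro member_le_sum) auto
      then show ?thesis using e unfolding trunc_monos_def by simp
    qed
    have "restrict e {..<v} \<in> {..<v} \<rightarrow>\<^sub>E {..<n}" using lt by auto
    moreover have "e = (\<lambda>i. if i < v then restrict e {..<v} i else 0)"
      using e unfolding trunc_monos_def by (auto simp: fun_eq_iff)
    ultimately show "e \<in> (\<lambda>f i. if i < v then f i else 0) ` ({..<v} \<rightarrow>\<^sub>E {..<n})"
      by blast
  qed
  then show ?thesis by (rule finite_subset) (intro finite_imageI finite_PiE; simp)
qed

lemma T_down: "e \<in> trunc_monos v n \<Longrightarrow> (\<And>i. e' i \<le> e i) \<Longrightarrow> e' \<in> trunc_monos v n"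
proof -
  assume e: "e \<in> trunc_monos v n" and le: "\<And>i. e' i \<le> e i"
  have "(\<Sum>i<v. e' i) \<le> (\<Sum>i<v. e i)" using le by (intro sum_mono)
  moreover have "e' i = 0" if "i \<ge> v" for i using le[of i] e that unfolding trunc_monos_def by auto
  ultimately show ?thesis using e unfolding trunc_monos_def by auto
qed

lemma zero_T: "n \<ge> 1 \<Longrightarrow> (\<lambda>_. 0) \<in> trunc_monos v n"
  by (simp add: trunc_monos_def)

lemma finite_P: "finite (Pset v n e)"
proof -
  have "Pset v n e \<subseteq> trunc_monos v n \<times> trunc_monos v n" by (auto simp: Pset_def)
  then show ?thesis by (rule finite_subset) (intro finite_cartesian_product finite_T)
qed

lemma finite_Q: "finite (Qset v n e)"
proof -
  have "Qset v n e \<subseteq> trunc_monos v n \<times> trunc_monos v n \<times> trunc_monos v n" by (auto simp: Qset_def)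
  then show ?thesis by (rule finite_subset) (intro finite_cartesian_product finite_T)
qed

lemma P_swap: "(a, b) \<in> Pset v n e \<Longrightarrow> (b, a) \<in> Pset v n e"
proof -
  assume "(a, b) \<in> Pset v n e"
  moreover have "(\<lambda>i. b i + a i) = (\<lambda>i. a i + b i)" by (rule ext) (rule add.commute)
  ultimately show ?thesis by (auto simp: Pset_def)
qed

lemma mult_comm_tr: "mult (trunc_ring v n) f g = (mult (trunc_ring v n) g f :: _ \<Rightarrow> 'a::field)"
proof (rule ext)
  fix e
  have "(\<Sum>p\<in>Pset v n e. f (fst p) * (g (snd p) :: 'a)) = (\<Sum>p\<in>Pset v n e. g (fst p) * f (snd p))"
  proof (rule sum.reindex_bij_witness[of _ prod.swap prod.swap])
  qed (auto simp: mult.commute P_swap)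
  then show "mult (trunc_ring v n) f g e = mult (trunc_ring v n) g f e"
    by (simp add: mult_tr)
qed

lemma assocL:
  assumes "e \<in> trunc_monos v n"
  shows "(\<Sum>p\<in>Pset v n e. \<Sum>q\<in>Pset v n (fst p). F (fst q) (snd q) (snd p))
       = (\<Sum>t\<in>Qset v n e. F (fst t) (fst (snd t)) (snd (snd t)))"
proof -
  have ab: "(\<lambda>i. a i + b i) \<in> trunc_monos v n" if "(a, b, c) \<in> Qset v n e" for a b c
    using assms by (rule T_down) (use that in \<open>auto simp: Qset_def\<close>)
  have "(\<Sum>p\<in>Pset v n e. \<Sum>q\<in>Pset v n (fst p). F (fst q) (snd q) (snd p))
      = (\<Sum>(p, q)\<in>Sigma (Pset v n e) (\<lambda>p. Pset v n (fst p)). F (fst q) (snd q) (snd p))"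
    using sum.Sigma[of "Pset v n e" "\<lambda>p. Pset v n (fst p)" "\<lambda>p q. F (fst q) (snd q) (snd p)"]
    by (simp add: finite_P)
  also have "\<dots> = (\<Sum>t\<in>Qset v n e. F (fst t) (fst (snd t)) (snd (snd t)))"
    apply (rule sum.reindex_bij_witness[of _ "\<lambda>t. (((\<lambda>i. fst t i + fst (snd t) i), snd (snd t)), (fst t, fst (snd t)))"
        "\<lambda>pq. (fst (snd pq), snd (snd pq), snd (fst pq))"])
    using ab by (auto simp: Pset_def Qset_def fun_eq_iff)
  finally show ?thesis .
qed

lemma assocR:
  assumes "e \<in> trunc_monos v n"
  shows "(\<Sum>p\<in>Pset v n e. \<Sum>q\<in>Pset v n (snd p). F (fst p) (fst q) (snd q))
       = (\<Sum>t\<in>Qset v n e. F (fst t) (fst (snd t)) (snd (snd t)))"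
proof -
  have bc: "(\<lambda>i. b i + c i) \<in> trunc_monos v n" if "(a, b, c) \<in> Qset v n e" for a b c
    using assms by (rule T_down) (use that in \<open>auto simp: Qset_def\<close>)
  have "(\<Sum>p\<in>Pset v n e. \<Sum>q\<in>Pset v n (snd p). F (fst p) (fst q) (snd q))
      = (\<Sum>(p, q)\<in>Sigma (Pset v n e) (\<lambda>p. Pset v n (snd p)). F (fst p) (fst q) (snd q))"
    using sum.Sigma[of "Pset v n e" "\<lambda>p. Pset v n (snd p)" "\<lambda>p q. F (fst p) (fst q) (snd q)"]
    by (simp add: finite_P)
  also have "\<dots> = (\<Sum>t\<in>Qset v n e. F (fst t) (fst (snd t)) (snd (snd t)))"
    apply (rule sum.reindex_bij_witness[of _ "\<lambda>t. ((fst t, (\<lambda>i. fst (snd t) i + snd (snd t) i)), (fst (snd t), snd (snd t)))"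
        "\<lambda>pq. (fst (fst pq), fst (snd pq), snd (snd pq))"])
    using bc by (auto simp: Pset_def Qset_def add.assoc)
  finally show ?thesis .
qed

lemma P_fst_T: "p \<in> Pset v n e \<Longrightarrow> fst p \<in> trunc_monos v n"
  and P_snd_T: "p \<in> Pset v n e \<Longrightarrow> snd p \<in> trunc_monos v n"
  by (auto simp: Pset_def)

lemma mult_assoc_tr:
  "mult (trunc_ring v n) (mult (trunc_ring v n) f g) h
   = (mult (trunc_ring v n) f (mult (trunc_ring v n) g h) :: _ \<Rightarrow> 'a::field)"
proof (rule ext)
  fix e
  show "mult (trunc_ring v n) (mult (trunc_ring v n) f g) h e
      = mult (trunc_ring v n) f (mult (trunc_ring v n) g h) e"
  proof (cases "e \<in> trunc_monos v n")
    case True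
    have "mult (trunc_ring v n) (mult (trunc_ring v n) f g) h e
        = (\<Sum>p\<in>Pset v n e. \<Sum>q\<in>Pset v n (fst p). f (fst q) * g (snd q) * (h (snd p) :: 'a))"
      using True by (simp add: mult_tr P_fst_T sum_distrib_right cong: sum.cong)
    also have "\<dots> = (\<Sum>t\<in>Qset v n e. f (fst t) * g (fst (snd t)) * h (snd (snd t)))"
      by (rule assocL[OF True])
    also have "\<dots> = (\<Sum>p\<in>Pset v n e. \<Sum>q\<in>Pset v n (snd p). f (fst p) * g (fst q) * h (snd q))"
      by (rule assocR[OF True, symmetric])
    also have "\<dots> = mult (trunc_ring v n) f (mult (trunc_ring v n) g h) e"
      using True by (simp add: mult_tr P_snd_T sum_distrib_left mult.assoc cong: sum.cong)
    finally show ?thesis .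
  qed (simp add: mult_tr)
qed



lemma dlt_ne0: "dlt l \<noteq> (\<lambda>_. 0)"
  by (auto simp: dlt_def fun_eq_iff)

lemma mult_lin:
  assumes n: "n \<ge> 1" and e: "e \<in> trunc_monos v n"
    and f0: "\<And>x. x \<noteq> (\<lambda>_. 0) \<Longrightarrow> x \<noteq> dlt l \<Longrightarrow> f x = 0"
  shows "mult (trunc_ring v n) f g e = f (\<lambda>_. 0) * (g e :: 'a::field)
          + (if 1 \<le> e l then f (dlt l) * g (\<lambda>i. e i - dlt l i) else 0)"
proof -
  define e' where "e' = (\<lambda>i. e i - dlt l i)"
  define S where "S = insert ((\<lambda>_. 0::nat), e) (if 1 \<le> e l then {(dlt l, e')} else {})"
  have z: "(\<lambda>_. 0) \<in> trunc_monos v n" using n by (rule zero_T)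
  have SP: "S \<subseteq> Pset v n e"
  proof
    fix p assume "p \<in> S"
    then consider "p = ((\<lambda>_. 0), e)" | "1 \<le> e l" "p = (dlt l, e')"
      unfolding S_def by (auto split: if_splits)
    then show "p \<in> Pset v n e"
    proof cases
      case 1 then show ?thesis using z e by (simp add: Pset_def)
    next
      case 2
      have "dlt l \<in> trunc_monos v n" using e by (rule T_down) (use 2 in \<open>auto simp: dlt_def\<close>)
      moreover have "e' \<in> trunc_monos v n" using e by (rule T_down) (auto simp: e'_def)
      moreover have "(\<lambda>i. dlt l i + e' i) = e" using 2 by (auto simp: e'_def dlt_def fun_eq_iff)
      ultimately show ?thesis using 2 by (simp add: Pset_def)
    qed
  qed
  have zero: "f (fst p) * g (snd p) = 0" if "p \<in> Pset v n e - S" for p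
  proof -
    obtain x y where p: "p = (x, y)" by fastforce
    have xy: "\<forall>i. x i + y i = e i" using that p by (auto simp: Pset_def fun_eq_iff)
    have "x \<noteq> (\<lambda>_. 0)"
    proof
      assume "x = (\<lambda>_. 0)"
      then have "y = e" using xy by (auto simp: fun_eq_iff)
      then show False using that p \<open>x = _\<close> by (auto simp: S_def)
    qed
    moreover have "x \<noteq> dlt l"
    proof
      assume x: "x = dlt l"
      then have "1 \<le> e l" using xy[rule_format, of l] by (simp add: dlt_def)
      moreover have "y = e'"
      proof (rule ext)
        fix i
        have "dlt l i + y i = e i" using xy x by simp
        then show "y i = e' i" unfolding e'_def by arith
      qed
      ultimately show False using that p x by (auto simp: S_def)
    qed
    ultimately show ?thesis using f0 p by simp
  qed
  have "mult (trunc_ring v n) f g e = (\<Sum>p\<in>Pset v n e. f (fst p) * g (snd p))"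
    using e by (simp add: mult_tr)
  also have "\<dots> = (\<Sum>p\<in>S. f (fst p) * g (snd p))"
    by (rule sum.mono_neutral_right[OF finite_P SP]) (use zero in blast)
  also have "\<dots> = f (\<lambda>_. 0) * g e + (if 1 \<le> e l then f (dlt l) * g e' else 0)"
  proof (cases "1 \<le> e l")
    case True
    have "((\<lambda>_. 0::nat), e) \<noteq> (dlt l, e')" using dlt_ne0[of l] by auto
    then show ?thesis using True by (simp add: S_def)
  qed (simp add: S_def)
  finally show ?thesis by (simp add: e'_def)
qed

lemma one_mult_tr:
  assumes n: "n \<ge> 1" and f: "f \<in> carrier (trunc_ring v n)"
  shows "mult (trunc_ring v n) (one (trunc_ring v n)) f = (f :: _ \<Rightarrow> 'a::field)"
proof (rule ext)
  fix e
  show "mult (trunc_ring v n) (one (trunc_ring v n)) f e = f e"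
  proof (cases "e \<in> trunc_monos v n")
    case True
    show ?thesis
      by (subst mult_lin[OF n True, where l=0]) (auto simp: one_tr dlt_ne0)
  next
    case False
    then show ?thesis using f by (simp add: mult_tr carrier_tr)
  qed
qed

lemma mult_closed_tr: "mult (trunc_ring v n) f g \<in> carrier (trunc_ring v n)"
  by (simp add: carrier_tr mult_tr)

lemma one_closed_tr: "n \<ge> 1 \<Longrightarrow> one (trunc_ring v n) \<in> carrier (trunc_ring v n)"
  using zero_T[of n v] by (auto simp: carrier_tr one_tr)

lemma units_closed_tr:
  assumes n: "n \<ge> 1" and x: "x \<in> Units (trunc_ring v n)" and y: "y \<in> Units (trunc_ring v n)"
  shows "mult (trunc_ring v n) x y \<in> Units (trunc_ring v n :: ((nat \<Rightarrow> nat) \<Rightarrow> 'a::field) ring)"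
proof -
  let ?R = "trunc_ring v n :: ((nat \<Rightarrow> nat) \<Rightarrow> 'a) ring"
  let ?m = "mult ?R"
  obtain x' where x': "x' \<in> carrier ?R" "?m x x' = one ?R" using x by (auto simp: Units_def)
  obtain y' where y': "y' \<in> carrier ?R" "?m y y' = one ?R" using y by (auto simp: Units_def)
  have "?m (?m x y) (?m y' x') = ?m x (?m (?m y y') x')"
    by (simp add: mult_assoc_tr)
  also have "\<dots> = one ?R" using y' x' one_mult_tr[OF n x'(1)] by simp
  finally have 1: "?m (?m x y) (?m y' x') = one ?R" .
  then have 2: "?m (?m y' x') (?m x y) = one ?R" by (simp add: mult_comm_tr)
  have "x \<in> carrier ?R" "y \<in> carrier ?R" using x y by (auto simp: Units_def)
  then show ?thesis using 1 2 mult_closed_tr unfolding Units_def by blast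
qed

lemma ev0_tr:
  assumes n: "n \<ge> 1"
  shows "mult (trunc_ring v n) f g (\<lambda>_. 0) = f (\<lambda>_. 0) * (g (\<lambda>_. 0) :: 'a::field)"
proof -
  have "Pset v n (\<lambda>_. 0) = {((\<lambda>_. 0), (\<lambda>_. 0))}"
    using zero_T[OF n, of v] by (auto simp: Pset_def fun_eq_iff)
  then show ?thesis using zero_T[OF n, of v] by (simp add: mult_tr)
qed

lemma unit_0_ne:
  assumes n: "n \<ge> 1" and x: "x \<in> Units (trunc_ring v n)"
  shows "(x (\<lambda>_. 0) :: 'a::field) \<noteq> 0"
proof -
  obtain x' where "mult (trunc_ring v n) x x' = one (trunc_ring v n)" using x by (auto simp: Units_def)
  then have "mult (trunc_ring v n) x x' (\<lambda>_. 0) = (1::'a)" by (simp add: one_tr)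
  then have "x (\<lambda>_. 0) * x' (\<lambda>_. 0) = (1::'a)" by (simp add: ev0_tr[OF n])
  then show ?thesis by (metis mult_zero_left zero_neq_one)
qed

definition invw :: "nat \<Rightarrow> nat \<Rightarrow> nat \<Rightarrow> 'a::field \<Rightarrow> (nat \<Rightarrow> nat) \<Rightarrow> 'a" where
  "invw v n l a = (\<lambda>e. if e \<in> trunc_monos v n \<and> (\<forall>i. i \<noteq> l \<longrightarrow> e i = 0)
      then - (inverse a ^ Suc (e l)) else 0)"

lemma vmc_unit:
  assumes n: "n \<ge> 1" and a: "(a::'a::field) \<noteq> 0"
  shows "var_minus_const v n l a \<in> Units (trunc_ring v n)"
proof -
  let ?R = "trunc_ring v n :: ((nat \<Rightarrow> nat) \<Rightarrow> 'a) ring"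
  let ?u = "var_minus_const v n l a" and ?w = "invw v n l a"
  have z: "(\<lambda>_. 0) \<in> trunc_monos v n" using n by (rule zero_T)
  have uc: "?u \<in> carrier ?R" by (simp add: carrier_tr var_minus_const_def)
  have wc: "?w \<in> carrier ?R" by (simp add: carrier_tr invw_def)
  have dl: "dlt l = (\<lambda>i. if i = l then 1 else 0)" by (simp add: dlt_def)
  have u0: "?u (\<lambda>_. 0) = - a" using z dlt_ne0[of l] by (simp add: var_minus_const_def dl[symmetric])
  have uz: "?u x = 0" if "x \<noteq> (\<lambda>_. 0)" "x \<noteq> dlt l" for x
    using that by (simp add: var_minus_const_def dl[symmetric])
  have prod: "mult ?R ?u ?w = one ?R"
  proof (rule ext)
    fix e
    show "mult ?R ?u ?w e = one ?R e"
    proof (cases "e \<in> trunc_monos v n")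
      case False
      then have "e \<noteq> (\<lambda>_. 0)" using z by auto
      then show ?thesis using False by (simp add: mult_tr one_tr)
    next
      case True
      define e' where "e' = (\<lambda>i. e i - dlt l i)"
      have m: "mult ?R ?u ?w e = - a * ?w e + (if 1 \<le> e l then ?u (dlt l) * ?w e' else 0)"
        using mult_lin[OF n True, where f="?u" and l=l and g="?w"] uz u0 by (simp add: e'_def)
      show ?thesis
      proof (cases "\<forall>i. i \<noteq> l \<longrightarrow> e i = 0")
        case sp: True
        show ?thesis
        proof (cases "e l = 0")
          case True
          have "e = (\<lambda>_. 0)"
          proof (rule ext)
            fix x show "e x = 0" using sp True by (cases "x = l") auto
          qed
          then show ?thesis using m z a by (simp add: invw_def one_tr)
        next
          case False
          have dT: "dlt l \<in> trunc_monos v n" using \<open>e \<in> _\<close> by (rule T_down) (use False in \<open>auto simp: dlt_def\<close>)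
          have e'T: "e' \<in> trunc_monos v n" using \<open>e \<in> _\<close> by (rule T_down) (auto simp: e'_def)
          have ud: "?u (dlt l) = 1" using dT dlt_ne0[of l] by (simp add: var_minus_const_def dl[symmetric])
          have e'sp: "\<forall>i. i \<noteq> l \<longrightarrow> e' i = 0" using sp by (simp add: e'_def dlt_def)
          have e'l: "e' l = e l - 1" by (simp add: e'_def dlt_def)
          have ne: "e \<noteq> (\<lambda>_. 0)" using False by auto
          have "- a * ?w e + ?u (dlt l) * ?w e' = a * inverse a ^ Suc (e l) - inverse a ^ e l"
            using True sp e'T e'sp e'l False ud by (simp add: invw_def)
          also have "\<dots> = 0" using a by (simp add: mult.assoc[symmetric])
          finally show ?thesis using m False ne by (simp add: one_tr)
        qed
      next
        case nsp: False
        then obtain i where i: "i \<noteq> l" "e i \<noteq> 0" by auto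
        have "e' i \<noteq> 0" using i by (simp add: e'_def dlt_def)
        then have "?w e' = 0" "?w e = 0" using i by (auto simp: invw_def)
        moreover have "e \<noteq> (\<lambda>_. 0)" using i by auto
        ultimately show ?thesis using m by (simp add: one_tr)
      qed
    qed
  qed
  have "mult ?R ?w ?u = one ?R" using prod by (simp add: mult_comm_tr)
  then show ?thesis using prod uc wc unfolding Units_def by blast
qed



lemma X_iff:
  "\<chi> \<in> (unit_characters v n :: (((nat \<Rightarrow> nat) \<Rightarrow> 'a::field) \<Rightarrow> complex) set) \<longleftrightarrow>
    (\<forall>u\<in>Units (trunc_ring v n :: ((nat \<Rightarrow> nat) \<Rightarrow> 'a) ring). cmod (\<chi> u) = 1) \<and>
    (\<forall>x\<in>Units (trunc_ring v n :: ((nat \<Rightarrow> nat) \<Rightarrow> 'a) ring). \<forall>y\<in>Units (trunc_ring v n :: ((nat \<Rightarrow> nat) \<Rightarrow> 'a) ring).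
        \<chi> (mult (trunc_ring v n) x y) = \<chi> x * \<chi> y) \<and>
    (\<forall>u. u \<notin> Units (trunc_ring v n :: ((nat \<Rightarrow> nat) \<Rightarrow> 'a) ring) \<longrightarrow> \<chi> u = undefined)"
  by (auto simp: unit_characters_def hom_def units_of_def circle_group_def extensional_def Pi_def)

lemma norm1_cnj: "cmod z = 1 \<Longrightarrow> z * cnj z = 1"
  using complex_norm_square[of z] by simp

lemma CHAR_le_CARD: "CHAR('a::{finite,field}) \<le> CARD('a)"
proof -
  have "inj_on (of_nat :: nat \<Rightarrow> 'a) {..<CHAR('a)}"
  proof (rule inj_onI)
    fix i j assume i: "i \<in> {..<CHAR('a)}" and j: "j \<in> {..<CHAR('a)}" and eq: "(of_nat i :: 'a) = of_nat j"
    show "i = j"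
    proof (rule ccontr)
      assume "i \<noteq> j"
      then consider "i < j" | "j < i" by linarith
      then show False
      proof cases
        case 1
        then have "(of_nat (j - i) :: 'a) = 0" using eq by (simp add: of_nat_diff)
        then have "CHAR('a) dvd (j - i)" by (simp add: of_nat_eq_0_iff_char_dvd)
        then show False using 1 j by (auto dest: dvd_imp_le)
      next
        case 2
        then have "(of_nat (i - j) :: 'a) = 0" using eq by (simp add: of_nat_diff)
        then have "CHAR('a) dvd (i - j)" by (simp add: of_nat_eq_0_iff_char_dvd)
        then show False using 2 i by (auto dest: dvd_imp_le)
      qed
    qed
  qed
  then have "card (of_nat ` {..<CHAR('a)} :: 'a set) = CHAR('a)" by (simp add: card_image)
  moreover have "card (of_nat ` {..<CHAR('a)} :: 'a set) \<le> CARD('a)" by (rule card_mono) auto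
  ultimately show ?thesis by simp
qed

lemma CHAR_ge2: "CHAR('a::{finite,field}) \<ge> 2"
proof -
  have "CHAR('a) > 0" by (rule finite_imp_CHAR_pos) simp
  moreover have "CHAR('a) \<noteq> Suc 0" by (rule CHAR_not_1)
  ultimately show ?thesis by linarith
qed

theorem lemma6p14:
  fixes v n l :: nat
  assumes "n \<ge> 1" and "v \<ge> 1" and "l < v"
  shows "(\<Sum>\<chi>\<in>(unit_characters v n :: (((nat \<Rightarrow> nat) \<Rightarrow> 'a::{finite,field}) \<Rightarrow> complex) set).
            cmod (\<Sum>a\<in>UNIV - {0::'a}. \<chi> (var_minus_const v n l a)))
           / real (card (unit_characters v n :: (((nat \<Rightarrow> nat) \<Rightarrow> 'a) \<Rightarrow> complex) set))
         \<le> real (CARD('a) - 1) / sqrt (real (CHAR('a) - 1))"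
proof -
  note n = assms(1)
  define R where "R = (trunc_ring v n :: ((nat \<Rightarrow> nat) \<Rightarrow> 'a) ring)"
  define U where "U = Units R"
  define X where "X = (unit_characters v n :: (((nat \<Rightarrow> nat) \<Rightarrow> 'a) \<Rightarrow> complex) set)"
  define A where "A = UNIV - {0::'a}"
  define ua where "ua a = var_minus_const v n l a" for a :: 'a
  define S where "S \<chi> = (\<Sum>a\<in>A. \<chi> (ua a))" for \<chi> :: "((nat \<Rightarrow> nat) \<Rightarrow> 'a) \<Rightarrow> complex"
  define N where "N = card X"
  have XI: "\<chi> \<in> X \<longleftrightarrow> (\<forall>u\<in>U. cmod (\<chi> u) = 1) \<and> (\<forall>x\<in>U. \<forall>y\<in>U. \<chi> (mult R x y) = \<chi> x * \<chi> y)
        \<and> (\<forall>u. u \<notin> U \<longrightarrow> \<chi> u = undefined)" for \<chi>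
    unfolding X_def U_def R_def by (rule X_iff)
  have Ucl: "mult R x y \<in> U" if "x \<in> U" "y \<in> U" for x y
    using units_closed_tr[OF n] that unfolding U_def R_def by blast
  have U0: "x (\<lambda>_. 0) \<noteq> 0" if "x \<in> U" for x
    using unit_0_ne[OF n] that unfolding U_def R_def by blast
  have ev0: "mult R x y (\<lambda>_. 0) = x (\<lambda>_. 0) * y (\<lambda>_. 0)" for x y
    unfolding R_def by (rule ev0_tr[OF n])
  have uaU: "ua a \<in> U" if "a \<in> A" for a
    using vmc_unit[OF n] that unfolding U_def R_def ua_def A_def by blast
  have ua0: "ua a (\<lambda>_. 0) = - a" for a
    using zero_T[OF n, of v] dlt_ne0[of l] by (auto simp: ua_def var_minus_const_def dlt_def)
  have card_A: "card A = CARD('a) - 1" unfolding A_def by (simp add: card_Diff_singleton)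
  have finA: "finite A" by simp
  show ?thesis
  proof (cases "N = 0")
    case True
    then show ?thesis unfolding N_def X_def by simp
  next
    case False
    have finX: "finite X"
    proof (rule ccontr)
      assume "infinite X" then show False using False by (simp add: N_def)
    qed
    obtain \<phi> :: "'a \<Rightarrow> complex" where
      \<phi>1: "\<And>x. x \<noteq> 0 \<Longrightarrow> cmod (\<phi> x) = 1" and
      \<phi>m: "\<And>x y. x \<noteq> 0 \<Longrightarrow> y \<noteq> 0 \<Longrightarrow> \<phi> (x * y) = \<phi> x * \<phi> y" and
      \<phi>i: "\<And>x y. x \<noteq> 0 \<Longrightarrow> y \<noteq> 0 \<Longrightarrow> \<phi> x = \<phi> y \<Longrightarrow> x = y"
      using cyclic_char[where 'a='a] by metis
    define \<psi> where "\<psi> u = (if u \<in> U then \<phi> (u (\<lambda>_. 0)) else undefined)" for u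
    define \<psi>b where "\<psi>b u = (if u \<in> U then cnj (\<phi> (u (\<lambda>_. 0))) else undefined)" for u
    define mulc where "mulc \<chi>1 \<chi>2 u = (if u \<in> U then \<chi>1 u * \<chi>2 u else undefined)"
      for \<chi>1 \<chi>2 :: "((nat \<Rightarrow> nat) \<Rightarrow> 'a) \<Rightarrow> complex" and u
    have \<psi>X: "\<psi> \<in> X" unfolding XI
    proof (intro conjI ballI allI impI)
      fix u assume "u \<in> U" then show "cmod (\<psi> u) = 1" using \<phi>1 U0 by (simp add: \<psi>_def)
    next
      fix x y assume xy: "x \<in> U" "y \<in> U"
      have "\<psi> (mult R x y) = \<phi> (x (\<lambda>_. 0) * y (\<lambda>_. 0))" using Ucl[OF xy] by (simp add: \<psi>_def ev0)
      also have "\<dots> = \<phi> (x (\<lambda>_. 0)) * \<phi> (y (\<lambda>_. 0))" using \<phi>m U0 xy by blast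
      finally show "\<psi> (mult R x y) = \<psi> x * \<psi> y" using xy by (simp add: \<psi>_def)
    next
      fix u assume "u \<notin> U" then show "\<psi> u = undefined" by (simp add: \<psi>_def)
    qed
    have \<psi>bX: "\<psi>b \<in> X" unfolding XI
    proof (intro conjI ballI allI impI)
      fix u assume "u \<in> U" then show "cmod (\<psi>b u) = 1" using \<phi>1 U0 by (simp add: \<psi>b_def)
    next
      fix x y assume xy: "x \<in> U" "y \<in> U"
      have "\<psi>b (mult R x y) = cnj (\<phi> (x (\<lambda>_. 0) * y (\<lambda>_. 0)))" using Ucl[OF xy] by (simp add: \<psi>b_def ev0)
      also have "\<dots> = cnj (\<phi> (x (\<lambda>_. 0)) * \<phi> (y (\<lambda>_. 0)))" using \<phi>m U0 xy by metis
      finally show "\<psi>b (mult R x y) = \<psi>b x * \<psi>b y" using xy by (simp add: \<psi>b_def)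
    next
      fix u assume "u \<notin> U" then show "\<psi>b u = undefined" by (simp add: \<psi>b_def)
    qed
    have mulcX: "mulc \<chi>1 \<chi>2 \<in> X" if c1: "\<chi>1 \<in> X" and c2: "\<chi>2 \<in> X" for \<chi>1 \<chi>2
      unfolding XI
    proof (intro conjI ballI allI impI)
      fix u assume "u \<in> U" then show "cmod (mulc \<chi>1 \<chi>2 u) = 1"
        using c1 c2 unfolding XI by (simp add: mulc_def norm_mult)
    next
      fix x y assume xy: "x \<in> U" "y \<in> U"
      have "\<chi>1 (mult R x y) = \<chi>1 x * \<chi>1 y" "\<chi>2 (mult R x y) = \<chi>2 x * \<chi>2 y"
        using c1 c2 xy unfolding XI by blast+
      then show "mulc \<chi>1 \<chi>2 (mult R x y) = mulc \<chi>1 \<chi>2 x * mulc \<chi>1 \<chi>2 y"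
        using xy Ucl[OF xy] by (simp add: mulc_def mult_ac)
    next
      fix u assume "u \<notin> U" then show "mulc \<chi>1 \<chi>2 u = undefined" by (simp add: mulc_def)
    qed
    have inv1: "mulc \<psi>b (mulc \<psi> \<chi>) = \<chi>" if "\<chi> \<in> X" for \<chi>
    proof (rule ext)
      fix u show "mulc \<psi>b (mulc \<psi> \<chi>) u = \<chi> u"
      proof (cases "u \<in> U")
        case True
        have "cnj (\<phi> (u (\<lambda>_. 0))) * \<phi> (u (\<lambda>_. 0)) = 1"
          using norm1_cnj[OF \<phi>1[OF U0[OF True]]] by (simp add: mult.commute)
        then show ?thesis using True by (simp add: mulc_def \<psi>_def \<psi>b_def mult.assoc[symmetric])
      next
        case False then show ?thesis using that unfolding XI by (simp add: mulc_def)
      qed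
    qed
    have inv2: "mulc \<psi> (mulc \<psi>b \<chi>) = \<chi>" if "\<chi> \<in> X" for \<chi>
    proof (rule ext)
      fix u show "mulc \<psi> (mulc \<psi>b \<chi>) u = \<chi> u"
      proof (cases "u \<in> U")
        case True
        have "\<phi> (u (\<lambda>_. 0)) * cnj (\<phi> (u (\<lambda>_. 0))) = 1"
          using norm1_cnj[OF \<phi>1[OF U0[OF True]]] by simp
        then show ?thesis using True by (simp add: mulc_def \<psi>_def \<psi>b_def mult.assoc[symmetric])
      next
        case False then show ?thesis using that unfolding XI by (simp add: mulc_def)
      qed
    qed
    define K where "K a b = (\<Sum>\<chi>\<in>X. \<chi> (ua a) * cnj (\<chi> (ua b)))" for a b
    have orth: "K a b = (if a = b then of_nat N else 0)" if a: "a \<in> A" and b: "b \<in> A" for a b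
    proof (cases "a = b")
      case True
      have "K a b = (\<Sum>\<chi>\<in>X. 1)"
        unfolding K_def True
      proof (rule sum.cong[OF refl])
        fix \<chi> assume "\<chi> \<in> X"
        then have "cmod (\<chi> (ua b)) = 1" using uaU[OF b] unfolding XI by blast
        then show "\<chi> (ua b) * cnj (\<chi> (ua b)) = 1" by (rule norm1_cnj)
      qed
      then show ?thesis using True by (simp add: N_def)
    next
      case False
      define h where "h \<chi> = \<chi> (ua a) * cnj (\<chi> (ua b))" for \<chi> :: "((nat \<Rightarrow> nat) \<Rightarrow> 'a) \<Rightarrow> complex"
      define c where "c = \<phi> (- a) * cnj (\<phi> (- b))"
      have an: "- a \<noteq> 0" "- b \<noteq> 0" using a b by (auto simp: A_def)
      have "(\<Sum>\<chi>\<in>X. h (mulc \<psi> \<chi>)) = (\<Sum>\<chi>\<in>X. h \<chi>)"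
        by (rule sum.reindex_bij_witness[of _ "mulc \<psi>b" "mulc \<psi>"])
           (auto simp: inv1 inv2 intro: mulcX \<psi>X \<psi>bX)
      moreover have "h (mulc \<psi> \<chi>) = c * h \<chi>" for \<chi>
        using uaU[OF a] uaU[OF b] by (simp add: h_def c_def mulc_def \<psi>_def ua0 mult_ac)
      ultimately have "c * K a b = K a b"
        by (simp add: K_def h_def sum_distrib_left)
      moreover have "c \<noteq> 1"
      proof
        assume "c = 1"
        then have "\<phi> (- a) * (cnj (\<phi> (- b)) * \<phi> (- b)) = \<phi> (- b)"
          by (simp add: c_def mult.assoc[symmetric])
        moreover have "cnj (\<phi> (- b)) * \<phi> (- b) = 1"
          using norm1_cnj[OF \<phi>1[OF an(2)]] by (simp add: mult.commute)
        ultimately have "\<phi> (- a) = \<phi> (- b)" by simp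
        then have "- a = - b" using \<phi>i an by blast
        then show False using False by simp
      qed
      ultimately have "K a b = 0"
        by (metis mult_cancel_right1 mult.commute eq_iff_diff_eq_0 mult_eq_0_iff right_diff_distrib' mult.right_neutral)
      then show ?thesis using False by simp
    qed
    have sq: "complex_of_real ((cmod (S \<chi>))\<^sup>2) = (\<Sum>a\<in>A. \<Sum>b\<in>A. \<chi> (ua a) * cnj (\<chi> (ua b)))" for \<chi>
      unfolding complex_norm_square S_def by (simp add: cnj_sum sum_product)
    have "complex_of_real (\<Sum>\<chi>\<in>X. (cmod (S \<chi>))\<^sup>2)
        = (\<Sum>\<chi>\<in>X. \<Sum>a\<in>A. \<Sum>b\<in>A. \<chi> (ua a) * cnj (\<chi> (ua b)))"
      by (simp only: of_real_sum sq)
    also have "\<dots> = (\<Sum>a\<in>A. \<Sum>\<chi>\<in>X. \<Sum>b\<in>A. \<chi> (ua a) * cnj (\<chi> (ua b)))"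
      by (rule sum.swap)
    also have "\<dots> = (\<Sum>a\<in>A. \<Sum>b\<in>A. K a b)"
      unfolding K_def by (rule sum.cong[OF refl]) (rule sum.swap)
    also have "\<dots> = (\<Sum>a\<in>A. of_nat N)"
      by (rule sum.cong[OF refl]) (simp add: orth finA)
    also have "\<dots> = complex_of_real (real (card A) * real N)" by simp
    finally have sumsq: "(\<Sum>\<chi>\<in>X. (cmod (S \<chi>))\<^sup>2) = real (card A) * real N"
      using of_real_eq_iff by blast
    have Npos: "real N > 0" using False by simp
    have "(\<Sum>\<chi>\<in>X. cmod (S \<chi>))\<^sup>2 \<le> (\<Sum>\<chi>\<in>X. (cmod (S \<chi>))\<^sup>2) * card X"
      by (rule sum_squared_le_sum_of_squares)
    also have "\<dots> = (real N)\<^sup>2 * real (card A)" unfolding sumsq N_def by (simp add: power2_eq_square)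
    finally have "(\<Sum>\<chi>\<in>X. cmod (S \<chi>)) \<le> sqrt ((real N)\<^sup>2 * real (card A))"
      by (rule real_le_rsqrt)
    also have "\<dots> = real N * sqrt (real (card A))" by (simp add: real_sqrt_mult)
    finally have "(\<Sum>\<chi>\<in>X. cmod (S \<chi>)) / real N \<le> sqrt (real (card A))"
      using Npos by (simp add: divide_le_eq mult.commute)
    also have "\<dots> \<le> real (CARD('a) - 1) / sqrt (real (CHAR('a) - 1))"
    proof -
      define Q where "Q = real (CARD('a) - 1)"
      define P where "P = real (CHAR('a) - 1)"
      have P1: "P \<ge> 1" using CHAR_ge2[where 'a='a] by (simp add: P_def)
      have PQ: "P \<le> Q"
      proof -
        have "CHAR('a) - 1 \<le> CARD('a) - 1" using CHAR_le_CARD[where 'a='a] by (rule diff_le_mono)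
        then show ?thesis unfolding P_def Q_def by (rule of_nat_mono)
      qed
      have "sqrt Q * sqrt P \<le> sqrt Q * sqrt Q"
        using PQ P1 by (intro mult_left_mono) auto
      also have "\<dots> = Q" using P1 PQ by simp
      finally have "sqrt Q \<le> Q / sqrt P" using P1 by (simp add: pos_le_divide_eq)
      then show ?thesis by (simp add: card_A Q_def P_def)
    qed
    finally show ?thesis unfolding S_def N_def X_def A_def ua_def .
  qed
qed


end
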